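(* Let $n$ agents share an additive valuation $v$ and suppose there are $0<L\le R$ with $v(g)\in[L,R]$ for every item $g$. Consider the online algorithm that in each round $t$ outputs $A^t=$ the allocation returned by Algorithm 3 run on $M_t=\{g_1,\dots,g_t\}$. Then every $A^t$ is a contiguous EF1 allocation of $M_t$, and the total number of adjustments is $O\!\left(\frac{R}{L}n^2T\right)$.
   Context: Items $g_1,\dots,g_T$ arrive online on a line. Contiguous allocation: agent $j$ receives the $j$-th block from the left. For a contiguous allocation $A$, $P(A)=(\ell_0,\dots,\ell_n)$ with $\ell_0=0$ and $P_j(A)$ the index of the last item of $A_j$. Leximin allocation: contiguous allocation maximizing the lowest agent value, then the second-lowest, and so on; the leximin$^2$ allocation is the leximin one with lexicographically smallest $P(A)$. Algorithm 3 (input $v$, item line $M$): let $A$ be the contiguous leximin$^2$ allocation of $M$; fix $i\in\arg\min_j v(A_j)$; for $j=1,\dots,i-1$ in order, while agent $i$ envies agent $j$ even up to one item, move the rightmost item of $A_j$ to $A_{j+1}$; then for $j=n,\dots,i+1$ in order, while agent $i$ envies agent $j$ even up to one item, move the leftmost item of $A_j$ to $A_{j-1}$; return $A$. Agent $i$ envies agent $j$ even up to one item if $A_j\neq\emptyset$ and $v(A_i)<v(A_j\setminus\{g\})$ for all $g\in A_j$. EF1: for all $i,j$, $A_j=\emptyset$ or some $g\in A_j$ has $v(A_i)\ge v(A_j\setminus\{g\})$. The number of adjustments is $\sum_{t=1}^{T-1}|\{g\in M_t: g \text{ is assigned to different agents in } A^t, A^{t+1}\}|$. *)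

theory Defs
  imports Complex_Main "HOL-Library.While_Combinator"
begin

text \<open>Items are identified with their arrival index 1,2,...; the line order is the
arrival order, so M_t = {1..t}.  A contiguous allocation of M_t to agents 1..n is
represented by its boundary vector P(A) = [l_0,...,l_n] (a list of length n+1) with
l_0 = 0, l_n = t, nondecreasing; agent j gets items {l_(j-1)+1 .. l_j}.\<close>

definition contig :: "nat \<Rightarrow> nat \<Rightarrow> nat list \<Rightarrow> bool" where
  "contig n t P \<longleftrightarrow> length P = Suc n \<and> P ! 0 = 0 \<and> P ! n = t \<and> sorted P"

definition blk :: "nat list \<Rightarrow> nat \<Rightarrow> nat set" where
  "blk P j = {P ! (j - 1) <.. P ! j}"

definition val :: "(nat \<Rightarrow> real) \<Rightarrow> nat set \<Rightarrow> real" where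
  "val v S = (\<Sum>g\<in>S. v g)"

definition agent_vals :: "(nat \<Rightarrow> real) \<Rightarrow> nat \<Rightarrow> nat list \<Rightarrow> real list" where
  "agent_vals v n P = map (\<lambda>j. val v (blk P j)) [1..<Suc n]"

definition is_leximin :: "(nat \<Rightarrow> real) \<Rightarrow> nat \<Rightarrow> nat \<Rightarrow> nat list \<Rightarrow> bool" where
  "is_leximin v n t P \<longleftrightarrow> contig n t P \<and>
     (\<forall>Q. contig n t Q \<longrightarrow> \<not> ord_class.lexordp (sort (agent_vals v n P)) (sort (agent_vals v n Q)))"

definition is_leximin2 :: "(nat \<Rightarrow> real) \<Rightarrow> nat \<Rightarrow> nat \<Rightarrow> nat list \<Rightarrow> bool" where
  "is_leximin2 v n t P \<longleftrightarrow> is_leximin v n t P \<and>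
     (\<forall>Q. is_leximin v n t Q \<longrightarrow> \<not> ord_class.lexordp Q P)"

definition envies_ef1 :: "(nat \<Rightarrow> real) \<Rightarrow> nat list \<Rightarrow> nat \<Rightarrow> nat \<Rightarrow> bool" where
  "envies_ef1 v P i j \<longleftrightarrow> blk P j \<noteq> {} \<and>
     (\<forall>g\<in>blk P j. val v (blk P i) < val v (blk P j - {g}))"

definition EF1 :: "(nat \<Rightarrow> real) \<Rightarrow> nat \<Rightarrow> nat list \<Rightarrow> bool" where
  "EF1 v n P \<longleftrightarrow> (\<forall>i\<in>{1..n}. \<forall>j\<in>{1..n}.
     blk P j = {} \<or> (\<exists>g\<in>blk P j. val v (blk P i) \<ge> val v (blk P j - {g})))"

text \<open>Left phase: for j = 1..i-1, while i envies j (EF1), move the rightmost item of A_j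
to A_(j+1), i.e. decrease l_j.\<close>
definition left_phase :: "(nat \<Rightarrow> real) \<Rightarrow> nat \<Rightarrow> nat list \<Rightarrow> nat list" where
  "left_phase v i P = foldl (\<lambda>Q j. while (\<lambda>Q. envies_ef1 v Q i j) (\<lambda>Q. Q[j := Q ! j - 1]) Q)
                           P [1..<i]"

text \<open>Right phase: for j = n, n-1, ..., i+1, while i envies j (EF1), move the leftmost item of
A_j to A_(j-1), i.e. increase l_(j-1).\<close>
definition right_phase :: "(nat \<Rightarrow> real) \<Rightarrow> nat \<Rightarrow> nat \<Rightarrow> nat list \<Rightarrow> nat list" where
  "right_phase v n i P = foldl (\<lambda>Q j. while (\<lambda>Q. envies_ef1 v Q i j)
                                   (\<lambda>Q. Q[j - 1 := Q ! (j - 1) + 1]) Q)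
                           P (rev [Suc i..<Suc n])"

text \<open>Possible outputs of Algorithm 3 on M_t (over all choices of the minimum agent i).\<close>
definition alg3 :: "(nat \<Rightarrow> real) \<Rightarrow> nat \<Rightarrow> nat \<Rightarrow> nat list \<Rightarrow> bool" where
  "alg3 v n t Q \<longleftrightarrow> (\<exists>P i. is_leximin2 v n t P \<and> i \<in> {1..n} \<and>
      (\<forall>j\<in>{1..n}. val v (blk P i) \<le> val v (blk P j)) \<and>
      Q = right_phase v n i (left_phase v i P))"

definition adjustments :: "nat \<Rightarrow> nat \<Rightarrow> (nat \<Rightarrow> nat list) \<Rightarrow> nat" where
  "adjustments n T A = (\<Sum>t\<in>{1..<T}.
      card {g\<in>{1..t}. \<not> (\<exists>j\<in>{1..n}. g \<in> blk (A t) j \<and> g \<in> blk (A (Suc t)) j)})"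

end

theory Submission
  imports Defs "HOL-Library.Multiset"
begin


lemma sorted_decomp:
  fixes m :: real
  assumes "sorted zs" "\<forall>z\<in>set zs. m \<le> z"
  shows "zs = replicate (count_list zs m) m @ filter (\<lambda>z. m < z) zs"
  using assms
proof (induction zs)
  case Nil then show ?case by simp
next
  case (Cons z zs)
  show ?case
  proof (cases "z = m")
    case True
    have "zs = replicate (count_list zs m) m @ filter (\<lambda>z. m < z) zs" using Cons by simp
    then show ?thesis using True by (simp add: replicate_app_Cons_same)
  next
    case False
    then have "m < z" using Cons by auto
    then have "\<forall>y\<in>set zs. m < y" using Cons by auto
    then have "count_list zs m = 0" "filter (\<lambda>z. m < z) zs = zs"
      by (auto simp: count_list_0_iff)
    then show ?thesis using \<open>m < z\<close> by simp
  qed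
qed

lemma count_sort: "count_list (sort xs) x = count_list xs x"
  by (metis count_mset mset_sort)

lemma improve_lex:
  fixes m :: real
  assumes "length xs = length ys" "\<forall>x\<in>set xs. m \<le> x" "\<forall>y\<in>set ys. m \<le> y"
    "count_list ys m < count_list xs m"
  shows "ord_class.lexordp (sort xs) (sort ys)"
proof -
  define c where "c = count_list xs m"
  define c' where "c' = count_list ys m"
  have dx: "sort xs = replicate c m @ filter (\<lambda>z. m < z) (sort xs)"
    using sorted_decomp[of "sort xs" m] assms(2) by (simp add: count_sort c_def)
  have dy: "sort ys = replicate c' m @ filter (\<lambda>z. m < z) (sort ys)"
    using sorted_decomp[of "sort ys" m] assms(3) by (simp add: count_sort c'_def)
  have cc: "c' < c" using assms(4) c_def c'_def by simp
  have "c \<le> length xs" unfolding c_def by (rule count_le_length)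
  have "length (sort ys) = c' + length (filter (\<lambda>z. m < z) (sort ys))"
    using dy by (metis length_append length_replicate)
  then have "filter (\<lambda>z. m < z) (sort ys) \<noteq> []"
    using cc \<open>c \<le> length xs\<close> assms(1) by auto
  then obtain y r where yr: "filter (\<lambda>z. m < z) (sort ys) = y # r" by (cases "filter (\<lambda>z. m < z) (sort ys)") auto
  then have "y \<in> set (filter (\<lambda>z. m < z) (sort ys))" by simp
  then have "m < y" by simp
  have ey: "sort ys = replicate c' m @ y # r" using dy yr by simp
  have ex: "sort xs = replicate c' m @ m # (replicate (c - Suc c') m @ filter (\<lambda>z. m < z) (sort xs))"
    using dx cc by (metis Suc_leI append.assoc append_Cons le_add_diff_inverse replicate_Suc replicate_add replicate_app_Cons_same)
  have "ord_class.lexordp (replicate c' m @ m # (replicate (c - Suc c') m @ filter (\<lambda>z. m < z) (sort xs))) (replicate c' m @ y # r)"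
    by (rule lexordp_append_leftI) (simp add: \<open>m < y\<close>)
  then show ?thesis using ex ey by simp
qed



lemma contig_len: "contig n t Q \<Longrightarrow> length Q = Suc n"
  by (simp add: contig_def)
lemma contig_mono: "contig n t Q \<Longrightarrow> j \<le> k \<Longrightarrow> k \<le> n \<Longrightarrow> Q!j \<le> Q!k"
  unfolding contig_def by (simp add: sorted_nth_mono)
lemma contig_le_t: "contig n t Q \<Longrightarrow> j \<le> n \<Longrightarrow> Q!j \<le> t"
  using contig_mono[of n t Q j n] by (simp add: contig_def)
lemma blk_sub: "contig n t Q \<Longrightarrow> 1 \<le> k \<Longrightarrow> k \<le> n \<Longrightarrow> blk Q k \<subseteq> {1..t}"
  unfolding blk_def using contig_le_t[of n t Q k] by auto
lemma blk_cong: "Q!(k-1) = Q'!(k-1) \<Longrightarrow> Q!k = Q'!k \<Longrightarrow> blk Q k = blk Q' k"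
  by (simp add: blk_def)
lemma envies_cong: "blk Q i = blk Q' i \<Longrightarrow> blk Q j = blk Q' j \<Longrightarrow> envies_ef1 v Q i j = envies_ef1 v Q' i j"
  by (simp add: envies_ef1_def)
lemma finite_blk[simp]: "finite (blk Q k)" by (simp add: blk_def)

lemma sorted_upd:
  assumes "sorted xs" "k < length xs" "0 < k \<Longrightarrow> xs!(k-1) \<le> x" "Suc k < length xs \<Longrightarrow> x \<le> xs!(Suc k)"
  shows "sorted (xs[k:=x])"
proof -
  have "\<forall>p q. p \<le> q \<longrightarrow> q < length xs \<longrightarrow> xs[k:=x]!p \<le> xs[k:=x]!q"
  proof (intro allI impI)
    fix p q assume pq: "p \<le> q" "q < length xs"
    show "xs[k:=x]!p \<le> xs[k:=x]!q"
    proof (cases "p = k")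
      case True
      then show ?thesis
      proof (cases "q = k")
        case False
        then have "Suc k \<le> q" using pq True by auto
        then have "xs!(Suc k) \<le> xs!q" using assms(1) pq by (simp add: sorted_nth_mono)
        then show ?thesis using True False assms(4) pq by auto
      qed simp
    next
      case False
      then show ?thesis
      proof (cases "q = k")
        case True
        then have "p \<le> k - 1" "0 < k" using pq False by auto
        then have "xs!p \<le> xs!(k-1)" using assms(1,2) by (simp add: sorted_nth_mono)
        then show ?thesis using True False assms(3) pq \<open>0<k\<close> by auto
      next
        case False2: False
        then show ?thesis using False assms(1) pq by (simp add: sorted_nth_mono)
      qed
    qed
  qed
  then show ?thesis by (simp add: sorted_iff_nth_mono)
qed

lemma val_insert: "finite A \<Longrightarrow> x \<notin> A \<Longrightarrow> val v (insert x A) = v x + val v A"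
  by (simp add: val_def)
lemma val_remove: "finite A \<Longrightarrow> x \<in> A \<Longrightarrow> val v (A - {x}) = val v A - v x"
  by (simp add: val_def sum_diff1)

definition S :: "(nat \<Rightarrow> real) \<Rightarrow> nat \<Rightarrow> real" where "S v k = val v {0<..k}"

lemma val_ivl: "a \<le> b \<Longrightarrow> val v {a<..b} = S v b - S v a"
proof -
  assume "a \<le> b"
  then have "{0<..b} = {0<..a} \<union> {a<..b}" by auto
  moreover have "{0<..a} \<inter> {a<..b} = {}" by auto
  ultimately have "S v b = S v a + val v {a<..b}"
    unfolding S_def val_def by (simp add: sum.union_disjoint)
  then show ?thesis by simp
qed

lemma S_0[simp]: "S v 0 = 0" by (simp add: S_def val_def)
lemma S_Suc: "S v (Suc k) = S v k + v (Suc k)"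
proof -
  have "{k<..Suc k} = {Suc k}" by auto
  then show ?thesis using val_ivl[of k "Suc k" v] by (simp add: val_def)
qed

lemma blk_val: "contig n t Q \<Longrightarrow> 1 \<le> j \<Longrightarrow> j \<le> n \<Longrightarrow> val v (blk Q j) = S v (Q!j) - S v (Q!(j-1))"
  unfolding blk_def by (rule val_ivl) (rule contig_mono, auto)

lemma blk_upd_other: "1 \<le> k \<Longrightarrow> j \<noteq> k \<Longrightarrow> j \<noteq> k - 1 \<Longrightarrow> blk (Q[j:=x]) k = blk Q k"
  by (simp add: blk_def)
lemma blk_upd_self: "1 \<le> j \<Longrightarrow> j < length Q \<Longrightarrow> blk (Q[j:=x]) j = {Q!(j-1)<..x}"
  by (simp add: blk_def)
lemma blk_upd_next: "j < length Q \<Longrightarrow> blk (Q[j:=x]) (Suc j) = {x<..Q!(Suc j)}"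
  by (simp add: blk_def)

lemma count_list_map_filter: "count_list (map f xs) a = length (filter (\<lambda>x. f x = a) xs)"
  by (induction xs) auto

lemma count_agent_vals: "count_list (agent_vals v n Q) a = card {k\<in>{1..n}. val v (blk Q k) = a}"
proof -
  have "count_list (agent_vals v n Q) a = card ({k. val v (blk Q k) = a} \<inter> set [1..<Suc n])"
    unfolding agent_vals_def count_list_map_filter by (rule distinct_length_filter) simp
  also have "({k. val v (blk Q k) = a} \<inter> set [1..<Suc n]) = {k\<in>{1..n}. val v (blk Q k) = a}" by auto
  finally show ?thesis .
qed

lemma set_agent_vals: "set (agent_vals v n Q) = (\<lambda>k. val v (blk Q k)) ` {1..n}"
  unfolding agent_vals_def by auto

lemma cover: assumes "contig n t Q" "g \<in> {1..t}" shows "\<exists>j\<in>{1..n}. g \<in> blk Q j"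
proof -
  have ex: "g \<le> Q!n" using assms by (simp add: contig_def)
  define j where "j = (LEAST j. g \<le> Q!j)"
  have 1: "g \<le> Q!j" unfolding j_def using ex by (rule LeastI)
  have 2: "j \<le> n" unfolding j_def using ex by (rule Least_le)
  have "j \<noteq> 0"
  proof
    assume "j = 0"
    then have "g \<le> 0" using 1 assms(1) by (simp add: contig_def)
    then show False using assms(2) by simp
  qed
  then have "\<not> g \<le> Q!(j-1)" unfolding j_def by (metis One_nat_def diff_less j_def lessI not_less_Least not_gr_zero)
  then have "g \<in> blk Q j" using 1 by (auto simp: blk_def)
  moreover have "j \<in> {1..n}" using 2 \<open>j\<noteq>0\<close> by auto
  ultimately show ?thesis by blast
qed



locale ph =
  fixes v :: "nat \<Rightarrow> real" and n t :: nat and P :: "nat list" and i :: nat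
  assumes lex: "is_leximin v n t P" and i1: "1 \<le> i" and i2: "i \<le> n"
    and minP: "\<forall>j\<in>{1..n}. val v (blk P i) \<le> val v (blk P j)"
    and pos: "\<forall>g\<in>{1..t}. 0 < v g"
begin

abbreviation "m \<equiv> val v (blk P i)"

definition good :: "nat list \<Rightarrow> bool" where
  "good Q \<longleftrightarrow> contig n t Q \<and> Q!(i-1) = P!(i-1) \<and> Q!i = P!i \<and>
     (\<forall>k\<in>{1..n}. m \<le> val v (blk Q k) \<and> (val v (blk Q k) = m \<longrightarrow> val v (blk P k) = m))"

lemma contigP: "contig n t P" using lex by (simp add: is_leximin_def)

lemma goodP: "good P" using contigP minP by (simp add: good_def)

lemma good_blk_i: "good Q \<Longrightarrow> blk Q i = blk P i"
  by (simp add: good_def blk_def)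

lemma no_better:
  assumes "contig n t Q" "\<forall>k\<in>{1..n}. m \<le> val v (blk Q k)"
    "{k\<in>{1..n}. val v (blk Q k) = m} \<subset> {k\<in>{1..n}. val v (blk P k) = m}"
  shows False
proof -
  have "ord_class.lexordp (sort (agent_vals v n P)) (sort (agent_vals v n Q))"
  proof (rule improve_lex[where m=m])
    show "length (agent_vals v n P) = length (agent_vals v n Q)" by (simp add: agent_vals_def)
    show "\<forall>x\<in>set (agent_vals v n P). m \<le> x" using minP by (simp add: set_agent_vals)
    show "\<forall>y\<in>set (agent_vals v n Q). m \<le> y" using assms(2) by (simp add: set_agent_vals)
    show "count_list (agent_vals v n Q) m < count_list (agent_vals v n P) m"
      unfolding count_agent_vals using assms(3) by (simp add: psubset_card_mono)
  qed
  then show False using lex assms(1) by (auto simp: is_leximin_def)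
qed

lemma blk_nonneg: "contig n t Q \<Longrightarrow> 1 \<le> k \<Longrightarrow> k \<le> n \<Longrightarrow> x \<in> blk Q k \<Longrightarrow> 0 < v x"
  using blk_sub pos by blast

lemma left_adj:
  assumes g: "good Q" and ii: "2 \<le> i" and e: "envies_ef1 v Q i (i-1)"
  shows False
proof -
  have c: "contig n t Q" using g by (simp add: good_def)
  define b where "b = Q!(i-1)"
  define Q' where "Q' = Q[i-1 := b - 1]"
  have ne: "blk Q (i-1) \<noteq> {}" using e by (simp add: envies_ef1_def)
  then have ab: "Q!(i-1-1) < b" by (auto simp: blk_def b_def)
  have bin: "b \<in> blk Q (i-1)" using ab by (auto simp: blk_def b_def)
  have len: "length Q = Suc n" using c by (simp add: contig_def)
  have c': "contig n t Q'"
    unfolding contig_def Q'_def using c ii ab len i2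
    apply (auto simp: contig_def)
    apply (rule sorted_upd)
    using contig_mono[OF c, of "i-1" i] i2 by (auto simp: b_def)
  have bi1: "blk Q' (i-1) = blk Q (i-1) - {b}" unfolding Q'_def
    using ii len i2 ab by (subst blk_upd_self) (auto simp: blk_def b_def)
  have bi: "blk Q' i = insert b (blk Q i)" unfolding Q'_def
    using blk_upd_next[of "i-1" Q "b-1"] ii len i2 ab contig_mono[OF c, of "i-1" i]
    by (auto simp: blk_def b_def)
  have oth: "blk Q' k = blk Q k" if "k\<in>{1..n}" "k \<noteq> i" "k \<noteq> i-1" for k
    unfolding Q'_def using that ii by (subst blk_upd_other) auto
  have vi1: "val v (blk Q' (i-1)) > m"
    using e bin unfolding bi1 envies_ef1_def good_blk_i[OF g] by auto
  have "v b > 0" using blk_nonneg[OF c _ _ bin] ii i2 by auto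
  moreover have "b \<notin> blk Q i" by (simp add: blk_def b_def)
  ultimately have vi: "val v (blk Q' i) > m"
    unfolding bi by (simp add: val_insert good_blk_i[OF g])
  show False
  proof (rule no_better[OF c'])
    have gk: "\<forall>k\<in>{1..n}. m \<le> val v (blk Q k) \<and> (val v (blk Q k) = m \<longrightarrow> val v (blk P k) = m)"
      using g by (simp add: good_def)
    show "\<forall>k\<in>{1..n}. m \<le> val v (blk Q' k)"
    proof
      fix k assume k: "k \<in> {1..n}"
      show "m \<le> val v (blk Q' k)"
      proof (cases "k = i \<or> k = i - 1")
        case True then show ?thesis using vi vi1 by auto
      next
        case False then show ?thesis using oth[OF k] gk k by auto
      qed
    qed
    have "{k\<in>{1..n}. val v (blk Q' k) = m} \<subseteq> {k\<in>{1..n}. val v (blk P k) = m} - {i}"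
    proof
      fix k assume k: "k \<in> {k\<in>{1..n}. val v (blk Q' k) = m}"
      then have k1: "k \<in> {1..n}" and k2: "val v (blk Q' k) = m" by auto
      have "k \<noteq> i" using vi k2 by auto
      moreover have "k \<noteq> i - 1" using vi1 k2 by auto
      ultimately show "k \<in> {k\<in>{1..n}. val v (blk P k) = m} - {i}"
        using oth[OF k1] gk k1 k2 by auto
    qed
    moreover have "i \<in> {k\<in>{1..n}. val v (blk P k) = m}" using i1 i2 by auto
    ultimately show "{k\<in>{1..n}. val v (blk Q' k) = m} \<subset> {k\<in>{1..n}. val v (blk P k) = m}" by blast
  qed
qed


lemma shift_left:
  assumes c: "contig n t Q" and j: "1 \<le> j" "j < n" and ne: "Q!(j-1) < Q!j"
  shows "contig n t (Q[j := Q!j - 1]) \<and> blk (Q[j := Q!j - 1]) j = blk Q j - {Q!j}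
    \<and> blk (Q[j := Q!j - 1]) (Suc j) = insert (Q!j) (blk Q (Suc j)) \<and> Q!j \<in> blk Q j
    \<and> Q!j \<notin> blk Q (Suc j)
    \<and> (\<forall>k. 1 \<le> k \<longrightarrow> k \<noteq> j \<longrightarrow> k \<noteq> Suc j \<longrightarrow> blk (Q[j := Q!j - 1]) k = blk Q k)"
proof -
  have len: "length Q = Suc n" using c by (simp add: contig_def)
  have m1: "Q!j \<le> Q!(Suc j)" using contig_mono[OF c, of j "Suc j"] j by auto
  have "contig n t (Q[j := Q!j - 1])"
    using c j ne len unfolding contig_def
    apply (auto)
    apply (rule sorted_upd)
    using m1 by auto
  moreover have "blk (Q[j := Q!j - 1]) j = blk Q j - {Q!j}"
    using j len ne by (subst blk_upd_self) (auto simp: blk_def)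
  moreover have "blk (Q[j := Q!j - 1]) (Suc j) = insert (Q!j) (blk Q (Suc j))"
    using j len ne m1 by (subst blk_upd_next) (auto simp: blk_def)
  moreover have "\<forall>k. 1 \<le> k \<longrightarrow> k \<noteq> j \<longrightarrow> k \<noteq> Suc j \<longrightarrow> blk (Q[j := Q!j - 1]) k = blk Q k"
  proof (intro allI impI)
    fix k assume "1 \<le> k" "k \<noteq> j" "k \<noteq> Suc j"
    then show "blk (Q[j := Q!j - 1]) k = blk Q k" by (intro blk_upd_other) auto
  qed
  ultimately show ?thesis using ne by (auto simp: blk_def)
qed

lemma shift_right:
  assumes c: "contig n t Q" and j: "1 \<le> j" "j < n" and ne: "Q!j < Q!(Suc j)"
  shows "contig n t (Q[j := Q!j + 1]) \<and> blk (Q[j := Q!j + 1]) j = insert (Q!j + 1) (blk Q j)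
    \<and> blk (Q[j := Q!j + 1]) (Suc j) = blk Q (Suc j) - {Q!j + 1} \<and> Q!j + 1 \<in> blk Q (Suc j)
    \<and> Q!j + 1 \<notin> blk Q j
    \<and> (\<forall>k. 1 \<le> k \<longrightarrow> k \<noteq> j \<longrightarrow> k \<noteq> Suc j \<longrightarrow> blk (Q[j := Q!j + 1]) k = blk Q k)"
proof -
  have len: "length Q = Suc n" using c by (simp add: contig_def)
  have m1: "Q!(j-1) \<le> Q!j" using contig_mono[OF c, of "j-1" j] j by auto
  have "contig n t (Q[j := Q!j + 1])"
    using c j ne len unfolding contig_def
    apply (auto)
    apply (rule sorted_upd)
    using m1 by auto
  moreover have "blk (Q[j := Q!j + 1]) j = insert (Q!j + 1) (blk Q j)"
    using j len ne m1 by (subst blk_upd_self) (auto simp: blk_def)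
  moreover have "blk (Q[j := Q!j + 1]) (Suc j) = blk Q (Suc j) - {Q!j + 1}"
    using j len ne by (subst blk_upd_next) (auto simp: blk_def)
  moreover have "\<forall>k. 1 \<le> k \<longrightarrow> k \<noteq> j \<longrightarrow> k \<noteq> Suc j \<longrightarrow> blk (Q[j := Q!j + 1]) k = blk Q k"
  proof (intro allI impI)
    fix k assume "1 \<le> k" "k \<noteq> j" "k \<noteq> Suc j"
    then show "blk (Q[j := Q!j + 1]) k = blk Q k" by (intro blk_upd_other) auto
  qed
  ultimately show ?thesis using ne by (auto simp: blk_def)
qed

end


context ph begin

lemma good_contig: "good Q \<Longrightarrow> contig n t Q" by (simp add: good_def)

lemma envy_m: "good Q \<Longrightarrow> envies_ef1 v Q i j \<Longrightarrow> blk Q j \<noteq> {} \<and> (\<forall>g\<in>blk Q j. m < val v (blk Q j) - v g)"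
  unfolding envies_ef1_def using good_blk_i by (auto simp: val_remove)

lemma good_intro:
  assumes "good Q" "contig n t Q'" "Q'!(i-1) = P!(i-1)" "Q'!i = P!i"
    "\<forall>k\<in>{1..n}. blk Q' k = blk Q k \<or> m < val v (blk Q' k)"
  shows "good Q'"
  using assms unfolding good_def by (metis less_imp_le less_irrefl)

lemma improve_false:
  assumes g: "good Q" and c': "contig n t Q'"
    and oth: "\<forall>k\<in>{1..n}. blk Q' k = blk Q k \<or> m < val v (blk Q' k)"
    and vi: "m < val v (blk Q' i)"
  shows False
proof (rule no_better[OF c'])
  have gk: "\<forall>k\<in>{1..n}. m \<le> val v (blk Q k) \<and> (val v (blk Q k) = m \<longrightarrow> val v (blk P k) = m)"
    using g by (simp add: good_def)
  show "\<forall>k\<in>{1..n}. m \<le> val v (blk Q' k)"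
    using oth gk by (metis less_imp_le)
  have "{k\<in>{1..n}. val v (blk Q' k) = m} \<subseteq> {k\<in>{1..n}. val v (blk P k) = m} - {i}"
  proof
    fix k assume k: "k \<in> {k\<in>{1..n}. val v (blk Q' k) = m}"
    then have k1: "k \<in> {1..n}" and k2: "val v (blk Q' k) = m" by auto
    have "k \<noteq> i" using vi k2 by auto
    moreover have "blk Q' k = blk Q k" using oth k1 k2 by force
    ultimately show "k \<in> {k\<in>{1..n}. val v (blk P k) = m} - {i}"
      using gk k1 k2 by auto
  qed
  moreover have "i \<in> {k\<in>{1..n}. val v (blk P k) = m}" using i1 i2 by auto
  ultimately show "{k\<in>{1..n}. val v (blk Q' k) = m} \<subset> {k\<in>{1..n}. val v (blk P k) = m}" by blast
qed

lemma right_adj: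
  assumes g: "good Q" and ii: "i < n" and e: "envies_ef1 v Q i (Suc i)"
  shows False
proof -
  have c: "contig n t Q" using g by (simp add: good_def)
  note em = envy_m[OF g e]
  have ne: "Q!i < Q!(Suc i)" using em by (auto simp: blk_def)
  note sh = shift_right[OF c i1 ii ne]
  define Q' where "Q' = Q[i := Q!i + 1]"
  have pv: "0 < v (Q!i + 1)" using blk_nonneg[OF c, of "Suc i"] sh ii by auto
  show False
  proof (rule improve_false[OF g, of Q'])
    show "contig n t Q'" using sh Q'_def by simp
    show "m < val v (blk Q' i)" using sh pv Q'_def good_blk_i[OF g] by (simp add: val_insert)
    show "\<forall>k\<in>{1..n}. blk Q' k = blk Q k \<or> m < val v (blk Q' k)"
    proof
      fix k assume k: "k \<in> {1..n}"
      show "blk Q' k = blk Q k \<or> m < val v (blk Q' k)"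
      proof (cases "k = i")
        case True then show ?thesis using sh pv Q'_def good_blk_i[OF g] by (simp add: val_insert)
      next
        case False
        show ?thesis
        proof (cases "k = Suc i")
          case True then show ?thesis using sh em Q'_def by (simp add: val_remove)
        next
          case False2: False
          then show ?thesis using sh False k Q'_def by auto
        qed
      qed
    qed
  qed
qed

lemma left_move:
  assumes g: "good Q" and j: "1 \<le> j" "j < i" and e: "envies_ef1 v Q i j"
  shows "good (Q[j := Q!j - 1])"
proof -
  have c: "contig n t Q" using g by (simp add: good_def)
  have "j \<noteq> i - 1" using left_adj[OF g] e j by force
  then have ji: "Suc j < i" using j by auto
  note em = envy_m[OF g e]
  have ne: "Q!(j-1) < Q!j" using em by (auto simp: blk_def)
  have jn: "j < n" using j i2 by auto
  note sh = shift_left[OF c j(1) jn ne]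
  define Q' where "Q' = Q[j := Q!j - 1]"
  have pv: "0 < v (Q!j)" using blk_nonneg[OF c, of j] sh j jn by auto
  have gs: "m \<le> val v (blk Q (Suc j))" using g jn by (auto simp: good_def)
  show ?thesis unfolding Q'_def[symmetric]
  proof (rule good_intro[OF g])
    show "contig n t Q'" using sh Q'_def by simp
    show "Q'!(i-1) = P!(i-1)" "Q'!i = P!i" using g ji Q'_def by (auto simp: good_def)
    show "\<forall>k\<in>{1..n}. blk Q' k = blk Q k \<or> m < val v (blk Q' k)"
    proof
      fix k assume k: "k \<in> {1..n}"
      show "blk Q' k = blk Q k \<or> m < val v (blk Q' k)"
      proof (cases "k = j")
        case True then show ?thesis using sh em Q'_def by (simp add: val_remove)
      next
        case False
        show ?thesis
        proof (cases "k = Suc j")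
          case True then show ?thesis using sh pv gs Q'_def by (simp add: val_insert)
        next
          case False2: False
          then show ?thesis using sh False k Q'_def by auto
        qed
      qed
    qed
  qed
qed

lemma right_move:
  assumes g: "good Q" and j: "i < j" "j \<le> n" and e: "envies_ef1 v Q i j"
  shows "good (Q[j - 1 := Q!(j - 1) + 1])"
proof -
  have c: "contig n t Q" using g by (simp add: good_def)
  have "j \<noteq> Suc i" using right_adj[OF g] e j by force
  then have ji: "i < j - 1" using j by auto
  define j' where "j' = j - 1"
  have jj: "j = Suc j'" using j j'_def by auto
  note em = envy_m[OF g e]
  have ne: "Q!j' < Q!(Suc j')" using em jj by (auto simp: blk_def)
  have j1: "1 \<le> j'" "j' < n" using ji j j'_def by auto
  note sh = shift_right[OF c j1 ne]
  define Q' where "Q' = Q[j' := Q!j' + 1]"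
  have pv: "0 < v (Q!j' + 1)" using blk_nonneg[OF c, of "Suc j'"] sh j1 by auto
  have gs: "m \<le> val v (blk Q j')" using g j1 by (auto simp: good_def)
  show ?thesis unfolding j'_def[symmetric] Q'_def[symmetric]
  proof (rule good_intro[OF g])
    show "contig n t Q'" using sh Q'_def by simp
    show "Q'!(i-1) = P!(i-1)" "Q'!i = P!i" using g ji Q'_def j'_def by (auto simp: good_def)
    show "\<forall>k\<in>{1..n}. blk Q' k = blk Q k \<or> m < val v (blk Q' k)"
    proof
      fix k assume k: "k \<in> {1..n}"
      show "blk Q' k = blk Q k \<or> m < val v (blk Q' k)"
      proof (cases "k = j'")
        case True then show ?thesis using sh pv gs Q'_def by (simp add: val_insert)
      next
        case False
        show ?thesis
        proof (cases "k = Suc j'")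
          case True then show ?thesis using sh em Q'_def jj by (simp add: val_remove)
        next
          case False2: False
          then show ?thesis using sh False k Q'_def by auto
        qed
      qed
    qed
  qed
qed

end


context ph begin

lemma left_loop:
  assumes g: "good Q" and j: "1 \<le> j" "j < i"
  shows "good (while (\<lambda>Q. envies_ef1 v Q i j) (\<lambda>Q. Q[j := Q ! j - 1]) Q) \<and>
    \<not> envies_ef1 v (while (\<lambda>Q. envies_ef1 v Q i j) (\<lambda>Q. Q[j := Q ! j - 1]) Q) i j \<and>
    (\<forall>k. k \<noteq> j \<longrightarrow> (while (\<lambda>Q. envies_ef1 v Q i j) (\<lambda>Q. Q[j := Q ! j - 1]) Q) ! k = Q ! k)"
proof (rule while_rule[where P = "\<lambda>s. good s \<and> (\<forall>k. k \<noteq> j \<longrightarrow> s!k = Q!k)" and r = "measure (\<lambda>s. s!j)"])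
  show "good Q \<and> (\<forall>k. k \<noteq> j \<longrightarrow> Q!k = Q!k)" using g by simp
  show "good (s[j := s ! j - 1]) \<and> (\<forall>k. k \<noteq> j \<longrightarrow> s[j := s ! j - 1]!k = Q!k)"
    if "good s \<and> (\<forall>k. k \<noteq> j \<longrightarrow> s!k = Q!k)" "envies_ef1 v s i j" for s
    using that left_move[OF _ j] by auto
  show "wf (measure (\<lambda>s. s!j))" by simp
  show "(s[j := s ! j - 1], s) \<in> measure (\<lambda>s. s!j)"
    if "good s \<and> (\<forall>k. k \<noteq> j \<longrightarrow> s!k = Q!k)" "envies_ef1 v s i j" for s
  proof -
    have "s!(j-1) < s!j" using envy_m[of s j] that by (auto simp: blk_def)
    moreover have "j < length s" using that j i2 by (auto simp: good_def contig_def)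
    ultimately show ?thesis by simp
  qed
qed auto

lemma right_loop:
  assumes g: "good Q" and j: "i < j" "j \<le> n"
  shows "good (while (\<lambda>Q. envies_ef1 v Q i j) (\<lambda>Q. Q[j - 1 := Q ! (j - 1) + 1]) Q) \<and>
    \<not> envies_ef1 v (while (\<lambda>Q. envies_ef1 v Q i j) (\<lambda>Q. Q[j - 1 := Q ! (j - 1) + 1]) Q) i j \<and>
    (\<forall>k. k \<noteq> j - 1 \<longrightarrow> (while (\<lambda>Q. envies_ef1 v Q i j) (\<lambda>Q. Q[j - 1 := Q ! (j - 1) + 1]) Q) ! k = Q ! k)"
proof (rule while_rule[where P = "\<lambda>s. good s \<and> (\<forall>k. k \<noteq> j - 1 \<longrightarrow> s!k = Q!k)" and r = "measure (\<lambda>s. t - s!(j-1))"])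
  show "good Q \<and> (\<forall>k. k \<noteq> j - 1 \<longrightarrow> Q!k = Q!k)" using g by simp
  show "good (s[j - 1 := s ! (j - 1) + 1]) \<and> (\<forall>k. k \<noteq> j - 1 \<longrightarrow> s[j - 1 := s ! (j - 1) + 1]!k = Q!k)"
    if "good s \<and> (\<forall>k. k \<noteq> j - 1 \<longrightarrow> s!k = Q!k)" "envies_ef1 v s i j" for s
    using that right_move[OF _ j] by auto
  show "wf (measure (\<lambda>s. t - s!(j-1)))" by simp
  show "(s[j - 1 := s ! (j - 1) + 1], s) \<in> measure (\<lambda>s. t - s!(j-1))"
    if "good s \<and> (\<forall>k. k \<noteq> j - 1 \<longrightarrow> s!k = Q!k)" "envies_ef1 v s i j" for s
  proof -
    have "s!(j-1) < s!j" using envy_m[of s j] that by (auto simp: blk_def)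
    moreover have "s!j \<le> t" using that j contig_le_t[of n t s j] by (auto simp: good_def)
    moreover have "j - 1 < length s" using that j by (auto simp: good_def contig_def)
    ultimately show ?thesis by simp
  qed
qed auto

lemma envy_keep:
  assumes "good Q" "good Q'" "\<not> envies_ef1 v Q i j" "Q!(j-1) = Q'!(j-1)" "Q!j = Q'!j"
  shows "\<not> envies_ef1 v Q' i j"
  using assms envies_cong[of Q i Q' j v] blk_cong[of Q j Q'] good_blk_i by metis

lemma left_fold:
  "k \<le> i \<Longrightarrow> good Q \<Longrightarrow>
    good (foldl (\<lambda>Q j. while (\<lambda>Q. envies_ef1 v Q i j) (\<lambda>Q. Q[j := Q ! j - 1]) Q) Q [1..<k]) \<and>
    (\<forall>j. 1 \<le> j \<and> j < k \<longrightarrow> \<not> envies_ef1 v (foldl (\<lambda>Q j. while (\<lambda>Q. envies_ef1 v Q i j) (\<lambda>Q. Q[j := Q ! j - 1]) Q) Q [1..<k]) i j)"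
proof (induction k)
  case 0 then show ?case by simp
next
  case (Suc k)
  show ?case
  proof (cases "k = 0")
    case True then show ?thesis using Suc by simp
  next
    case False
    define Q1 where "Q1 = foldl (\<lambda>Q j. while (\<lambda>Q. envies_ef1 v Q i j) (\<lambda>Q. Q[j := Q ! j - 1]) Q) Q [1..<k]"
    have IH: "good Q1" "\<forall>j. 1 \<le> j \<and> j < k \<longrightarrow> \<not> envies_ef1 v Q1 i j"
      using Suc Q1_def by auto
    define Q2 where "Q2 = while (\<lambda>Q. envies_ef1 v Q i k) (\<lambda>Q. Q[k := Q ! k - 1]) Q1"
    have L: "good Q2" "\<not> envies_ef1 v Q2 i k" "\<forall>x. x \<noteq> k \<longrightarrow> Q2!x = Q1!x"
      using left_loop[OF IH(1), of k] False Suc.prems unfolding Q2_def by auto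
    have eq: "foldl (\<lambda>Q j. while (\<lambda>Q. envies_ef1 v Q i j) (\<lambda>Q. Q[j := Q ! j - 1]) Q) Q [1..<Suc k] = Q2"
      using False by (simp add: Q1_def Q2_def)
    have "\<forall>j. 1 \<le> j \<and> j < Suc k \<longrightarrow> \<not> envies_ef1 v Q2 i j"
    proof (intro allI impI)
      fix j assume j: "1 \<le> j \<and> j < Suc k"
      show "\<not> envies_ef1 v Q2 i j"
      proof (cases "j = k")
        case True then show ?thesis using L by simp
      next
        case False
        then show ?thesis using envy_keep[OF IH(1) L(1), of j] IH(2) L(3) j by auto
      qed
    qed
    then show ?thesis unfolding eq using L by simp
  qed
qed

lemma right_fold:
  "Suc i + d \<le> Suc n \<Longrightarrow> good Q \<Longrightarrow> (\<forall>j. Suc i + d \<le> j \<and> j \<le> n \<longrightarrow> \<not> envies_ef1 v Q i j) \<Longrightarrow>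
    (\<forall>j. 1 \<le> j \<and> j < i \<longrightarrow> \<not> envies_ef1 v Q i j) \<Longrightarrow>
    good (foldl (\<lambda>Q j. while (\<lambda>Q. envies_ef1 v Q i j) (\<lambda>Q. Q[j - 1 := Q ! (j - 1) + 1]) Q) Q (rev [Suc i..<Suc i + d])) \<and>
    (\<forall>j. 1 \<le> j \<and> j \<le> n \<and> j \<noteq> i \<longrightarrow> \<not> envies_ef1 v (foldl (\<lambda>Q j. while (\<lambda>Q. envies_ef1 v Q i j) (\<lambda>Q. Q[j - 1 := Q ! (j - 1) + 1]) Q) Q (rev [Suc i..<Suc i + d])) i j)"
proof (induction d arbitrary: Q)
  case 0
  have "\<forall>j. 1 \<le> j \<and> j \<le> n \<and> j \<noteq> i \<longrightarrow> \<not> envies_ef1 v Q i j"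
  proof (intro allI impI)
    fix j assume j: "1 \<le> j \<and> j \<le> n \<and> j \<noteq> i"
    show "\<not> envies_ef1 v Q i j"
    proof (cases "j < i")
      case True then show ?thesis using 0 j by auto
    next
      case False then show ?thesis using 0 j by auto
    qed
  qed
  then show ?case using 0 by simp
next
  case (Suc d)
  define j0 where "j0 = Suc i + d"
  define Q1 where "Q1 = while (\<lambda>Q. envies_ef1 v Q i j0) (\<lambda>Q. Q[j0 - 1 := Q ! (j0 - 1) + 1]) Q"
  have L: "good Q1" "\<not> envies_ef1 v Q1 i j0" "\<forall>x. x \<noteq> j0 - 1 \<longrightarrow> Q1!x = Q!x"
    using right_loop[OF Suc.prems(2), of j0] Suc.prems(1) unfolding Q1_def j0_def by auto
  have eq: "foldl (\<lambda>Q j. while (\<lambda>Q. envies_ef1 v Q i j) (\<lambda>Q. Q[j - 1 := Q ! (j - 1) + 1]) Q) Q (rev [Suc i..<Suc i + Suc d])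
     = foldl (\<lambda>Q j. while (\<lambda>Q. envies_ef1 v Q i j) (\<lambda>Q. Q[j - 1 := Q ! (j - 1) + 1]) Q) Q1 (rev [Suc i..<Suc i + d])"
    by (simp add: Q1_def j0_def)
  have h1: "\<forall>j. Suc i + d \<le> j \<and> j \<le> n \<longrightarrow> \<not> envies_ef1 v Q1 i j"
  proof (intro allI impI)
    fix j assume j: "Suc i + d \<le> j \<and> j \<le> n"
    show "\<not> envies_ef1 v Q1 i j"
    proof (cases "j = j0")
      case True then show ?thesis using L by simp
    next
      case False
      then show ?thesis using envy_keep[OF Suc.prems(2) L(1), of j] Suc.prems(3) L(3) j j0_def by auto
    qed
  qed
  have h2: "\<forall>j. 1 \<le> j \<and> j < i \<longrightarrow> \<not> envies_ef1 v Q1 i j"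
  proof (intro allI impI)
    fix j assume j: "1 \<le> j \<and> j < i"
    show "\<not> envies_ef1 v Q1 i j"
      using envy_keep[OF Suc.prems(2) L(1), of j] Suc.prems(4) L(3) j j0_def by auto
  qed
  show ?case unfolding eq using Suc.IH[OF _ L(1) h1 h2] Suc.prems(1) by simp
qed

lemma phases:
  "good (right_phase v n i (left_phase v i P)) \<and>
   (\<forall>j. 1 \<le> j \<and> j \<le> n \<and> j \<noteq> i \<longrightarrow> \<not> envies_ef1 v (right_phase v n i (left_phase v i P)) i j)"
proof -
  have L: "good (left_phase v i P)" "\<forall>j. 1 \<le> j \<and> j < i \<longrightarrow> \<not> envies_ef1 v (left_phase v i P) i j"
    using left_fold[of i P] goodP unfolding left_phase_def by auto
  have e: "Suc n = Suc i + (n - i)" using i2 by simp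
  have R: "good (foldl (\<lambda>Q j. while (\<lambda>Q. envies_ef1 v Q i j) (\<lambda>Q. Q[j - 1 := Q ! (j - 1) + 1]) Q) (left_phase v i P) (rev [Suc i..<Suc i + (n - i)])) \<and>
    (\<forall>j. 1 \<le> j \<and> j \<le> n \<and> j \<noteq> i \<longrightarrow> \<not> envies_ef1 v (foldl (\<lambda>Q j. while (\<lambda>Q. envies_ef1 v Q i j) (\<lambda>Q. Q[j - 1 := Q ! (j - 1) + 1]) Q) (left_phase v i P) (rev [Suc i..<Suc i + (n - i)])) i j)"
    by (rule right_fold) (use L i2 in auto)
  show ?thesis using R unfolding right_phase_def e[symmetric] .
qed

end


context ph begin

lemma out_good: "good (right_phase v n i (left_phase v i P))" using phases by simp

lemma EF1_good:
  assumes g: "good Q" and ne: "\<forall>j. 1 \<le> j \<and> j \<le> n \<and> j \<noteq> i \<longrightarrow> \<not> envies_ef1 v Q i j"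
  shows "EF1 v n Q"
  unfolding EF1_def
proof (intro ballI)
  fix k j assume k: "k \<in> {1..n}" and j: "j \<in> {1..n}"
  have c: "contig n t Q" using g by (simp add: good_def)
  have mk: "m \<le> val v (blk Q k)" using g k by (simp add: good_def)
  have bi: "val v (blk Q i) = m" using good_blk_i[OF g] by simp
  show "blk Q j = {} \<or> (\<exists>g\<in>blk Q j. val v (blk Q k) \<ge> val v (blk Q j - {g}))"
  proof (cases "j = i")
    case True
    show ?thesis
    proof (cases "blk Q j = {}")
      case False
      then obtain x where x: "x \<in> blk Q j" by auto
      have "0 < v x" using blk_nonneg[OF c _ _ x] j by auto
      then have "val v (blk Q j - {x}) \<le> val v (blk Q k)"
        using x True bi mk by (simp add: val_remove)
      then show ?thesis using x by blast
    qed simp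
  next
    case False
    then have "\<not> envies_ef1 v Q i j" using ne j by auto
    then have "blk Q j = {} \<or> (\<exists>x\<in>blk Q j. val v (blk Q j - {x}) \<le> m)"
      unfolding envies_ef1_def bi by (auto simp: not_less)
    then show ?thesis using mk by force
  qed
qed

lemma out_EF1: "EF1 v n (right_phase v n i (left_phase v i P))"
  using phases EF1_good by blast

lemma S_mono: "a \<le> b \<Longrightarrow> b \<le> t \<Longrightarrow> S v a \<le> S v b"
proof -
  assume ab: "a \<le> b" "b \<le> t"
  have "0 \<le> val v {a<..b}" unfolding val_def
  proof (rule sum_nonneg)
    fix x assume "x \<in> {a<..b}"
    then have "x \<in> {1..t}" using ab by auto
    then have "0 < v x" using pos by blast
    then show "0 \<le> v x" by simp
  qed
  then show ?thesis using val_ivl[OF ab(1)] by simp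
qed

lemma S_strict: "a < b \<Longrightarrow> b \<le> t \<Longrightarrow> S v a < S v b"
proof -
  assume ab: "a < b" "b \<le> t"
  have "0 < val v {a<..b}" unfolding val_def
    by (rule sum_pos) (use pos ab in auto)
  then show ?thesis using val_ivl[of a b] ab by simp
qed

lemma sum_lower: "good Q \<Longrightarrow> j + d \<le> n \<Longrightarrow> real d * m \<le> S v (Q!(j+d)) - S v (Q!j)"
proof (induction d)
  case 0 then show ?case by simp
next
  case (Suc d)
  have c: "contig n t Q" using Suc.prems by (simp add: good_def)
  have "val v (blk Q (j + Suc d)) = S v (Q!(j + Suc d)) - S v (Q!(j + d))"
    using blk_val[OF c, of "j + Suc d" v] Suc.prems by simp
  moreover have "m \<le> val v (blk Q (j + Suc d))" using Suc.prems by (auto simp: good_def)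
  ultimately show ?case using Suc by (simp add: algebra_simps)
qed

lemma m_lower:
  assumes R: "\<forall>g\<in>{1..t}. v g \<le> R" "0 \<le> R" and n1: "1 \<le> n"
  shows "S v t / n - R \<le> m"
proof (rule ccontr)
  assume "\<not> S v t / n - R \<le> m"
  then have mlt: "m < S v t / n - R" by simp
  define W where "W = S v t"
  have W0: "0 \<le> W" unfolding W_def using S_mono[of 0 t] by simp
  define p where "p j = (LEAST p. p \<le> t \<and> real j * W / n \<le> S v p)" for j
  have ex: "t \<le> t \<and> real j * W / n \<le> S v t" if "j \<le> n" for j
  proof -
    have "real j * W / n \<le> real n * W / n"
      using that W0 by (intro divide_right_mono mult_right_mono) auto
    also have "\<dots> = W" using n1 by simp
    finally show ?thesis by (simp add: W_def)
  qed
  have pj: "p j \<le> t \<and> real j * W / n \<le> S v (p j)" if "j \<le> n" for j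
    unfolding p_def by (rule LeastI[of _ t]) (rule ex[OF that])
  have p0: "p 0 = 0" unfolding p_def by (rule Least_eq_0) simp
  have pn: "p n = t"
  proof (rule ccontr)
    assume "p n \<noteq> t"
    then have "p n < t" using pj[of n] by auto
    then have "S v (p n) < W" using S_strict W_def by auto
    moreover have "W \<le> S v (p n)" using pj[of n] n1 by simp
    ultimately show False by simp
  qed
  have pmono: "p j \<le> p k" if "j \<le> k" "k \<le> n" for j k
  proof -
    have "real j * W / n \<le> real k * W / n"
      using that W0 by (intro divide_right_mono mult_right_mono) auto
    then have "p k \<le> t \<and> real j * W / n \<le> S v (p k)" using pj[OF that(2)] by simp
    then show ?thesis unfolding p_def[of j] by (rule Least_le)
  qed
  have pup: "S v (p j) \<le> real j * W / n + R" if "j \<le> n" for j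
  proof (cases "p j = 0")
    case True then show ?thesis using W0 R(2) by simp
  next
    case False
    then have "p j - 1 < p j" by simp
    then have "\<not> (p j - 1 \<le> t \<and> real j * W / n \<le> S v (p j - 1))"
      unfolding p_def by (rule not_less_Least)
    moreover have "p j - 1 \<le> t" using pj[OF that] diff_le_self le_trans by blast
    ultimately have "S v (p j - 1) < real j * W / n" by simp
    moreover have "S v (p j) = S v (p j - 1) + v (p j)" using S_Suc[of v "p j - 1"] False by simp
    moreover have "v (p j) \<le> R" using R pj[OF that] False by simp
    ultimately show ?thesis by simp
  qed
  define Q' where "Q' = map p [0..<Suc n]"
  have Qn: "Q'!j = p j" if "j \<le> n" for j using that Q'_def by (simp del: upt_Suc)
  have c': "contig n t Q'"
    unfolding contig_def
  proof (intro conjI)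
    show "length Q' = Suc n" by (simp add: Q'_def)
    show "Q'!0 = 0" using Qn[of 0] p0 by simp
    show "Q'!n = t" using Qn[of n] pn by simp
    show "sorted Q'" unfolding sorted_iff_nth_mono
      using Qn pmono by (simp add: Q'_def del: upt_Suc)
  qed
  have big: "m < val v (blk Q' k)" if "k \<in> {1..n}" for k
  proof -
    have "val v (blk Q' k) = S v (p k) - S v (p (k - 1))"
      using blk_val[OF c', of k v] that Qn by auto
    moreover have "real k * W / n \<le> S v (p k)" using pj that by auto
    moreover have "k - 1 \<le> n" using that by auto
    then have "S v (p (k-1)) \<le> real (k-1) * W / n + R" by (rule pup)
    moreover have "real (k-1) * W / n = real k * W / n - W / n" using that
      by (simp add: of_nat_diff algebra_simps diff_divide_distrib)
    ultimately show ?thesis using mlt W_def by simp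
  qed
  show False
  proof (rule no_better[OF c'])
    show "\<forall>k\<in>{1..n}. m \<le> val v (blk Q' k)" using big less_imp_le by blast
    have "{k\<in>{1..n}. val v (blk Q' k) = m} = {}" using big by force
    moreover have "i \<in> {k\<in>{1..n}. val v (blk P k) = m}" using i1 i2 by auto
    ultimately show "{k\<in>{1..n}. val v (blk Q' k) = m} \<subset> {k\<in>{1..n}. val v (blk P k) = m}" by blast
  qed
qed

lemma bound_good:
  assumes R: "\<forall>g\<in>{1..t}. v g \<le> R" "0 \<le> R" and n1: "1 \<le> n" and g: "good Q" and j: "j \<le> n"
  shows "\<bar>S v (Q!j) - real j * S v t / n\<bar> \<le> real n * R"
proof -
  define W where "W = S v t"
  have ml: "W / n - R \<le> m" using m_lower[OF R n1] W_def by simp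
  have c: "contig n t Q" using g by (simp add: good_def)
  have q0: "Q!0 = 0" and qn: "Q!n = t" using c by (auto simp: contig_def)
  have lo: "real j * m \<le> S v (Q!j)" using sum_lower[OF g, of 0 j] j q0 by simp
  have hi: "real (n - j) * m \<le> W - S v (Q!j)" using sum_lower[OF g, of j "n - j"] j qn W_def by simp
  have "blk P i \<subseteq> {1..t}" using blk_sub[OF contigP i1 i2] .
  then have m0: "0 \<le> m" unfolding val_def using pos by (intro sum_nonneg) (auto simp: less_imp_le)
  have "real j * (W / n - R) \<le> real j * m" using ml by (simp add: mult_left_mono)
  moreover have "real (n - j) * (W / n - R) \<le> real (n - j) * m" using ml by (simp add: mult_left_mono)
  moreover have "real (n-j) = real n - real j" using j by (simp add: of_nat_diff)
  moreover have "real j * (W / n - R) = real j * W / n - real j * R" by (simp add: algebra_simps)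
  moreover have "(real n - real j) * (W / n - R) = W - real j * W / n - (real n - real j) * R"
    using n1 by (simp add: algebra_simps)
  moreover have "real j * R \<le> real n * R" using j R(2) by (simp add: mult_right_mono)
  moreover have "(real n - real j) * R \<le> real n * R" using R(2) by (simp add: mult_right_mono)
  ultimately show ?thesis using lo hi unfolding W_def[symmetric] by (simp add: abs_le_iff)
qed

end


lemma alg3_props:
  assumes a: "alg3 v n t Q" and vp: "\<forall>g\<in>{1..t}. 0 < v g \<and> v g \<le> R" and R: "0 \<le> R" and n1: "1 \<le> n"
  shows "contig n t Q \<and> EF1 v n Q \<and> (\<forall>j\<le>n. \<bar>S v (Q!j) - real j * S v t / n\<bar> \<le> real n * R)"
proof -
  obtain P i where P: "is_leximin2 v n t P" "i \<in> {1..n}" "\<forall>j\<in>{1..n}. val v (blk P i) \<le> val v (blk P j)"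
    and Q: "Q = right_phase v n i (left_phase v i P)"
    using a unfolding alg3_def by blast
  interpret ph v n t P i
    using P vp by unfold_locales (auto simp: is_leximin2_def)
  have g: "good Q" using out_good Q by simp
  show ?thesis
  proof (intro conjI allI impI)
    show "contig n t Q" using g by (simp add: good_def)
    show "EF1 v n Q" using out_EF1 Q by simp
    fix j assume "j \<le> n"
    then show "\<bar>S v (Q!j) - real j * S v t / n\<bar> \<le> real n * R"
      using bound_good[OF _ R n1 g] vp by auto
  qed
qed

lemma S_lower:
  assumes "a \<le> b" "\<forall>g\<in>{a<..b}. L \<le> v g"
  shows "L * real (b - a) \<le> S v b - S v a"
proof -
  have "real (card {a<..b}) * L \<le> val v {a<..b}" unfolding val_def
    by (rule sum_bounded_below) (use assms in auto)
  then show ?thesis using val_ivl[OF assms(1), of v] by (simp add: mult.commute)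
qed

lemma lin6: "(a::real) - x \<le> N \<Longrightarrow> x - a \<le> N \<Longrightarrow> b - y \<le> N \<Longrightarrow> y - b \<le> N \<Longrightarrow> w \<le> R \<Longrightarrow> 0 \<le> w \<Longrightarrow> y = x + w \<Longrightarrow> \<bar>a - b\<bar> \<le> N + N + R"
  by (simp add: abs_le_iff)

lemma step_bound:
  fixes Q1 Q2 :: "nat list"
  assumes n1: "1 \<le> n" and L: "0 < L" and vb: "\<forall>g\<in>{1..Suc t}. L \<le> v g \<and> v g \<le> R"
    and c1: "contig n t Q1" and c2: "contig n (Suc t) Q2"
    and b1: "\<forall>j\<le>n. \<bar>S v (Q1!j) - real j * S v t / n\<bar> \<le> real n * R"
    and b2: "\<forall>j\<le>n. \<bar>S v (Q2!j) - real j * S v (Suc t) / n\<bar> \<le> real n * R"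
  shows "real (card {g\<in>{1..t}. \<not> (\<exists>j\<in>{1..n}. g \<in> blk Q1 j \<and> g \<in> blk Q2 j)}) \<le> 3 * (R / L) * real n ^ 2"
proof -
  define D where "D k = {min (Q1!k) (Q2!k) <.. max (Q1!k) (Q2!k)}" for k
  have dist: "real (card (D k)) \<le> (2 * real n + 1) * R / L" if k: "k \<le> n" for k
  proof -
    define a where "a = Q1!k"
    define b where "b = Q2!k"
    have at: "a \<le> Suc t" using contig_le_t[OF c1 k] a_def by simp
    have bt: "b \<le> Suc t" using contig_le_t[OF c2 k] b_def by simp
    have "Suc t \<in> {1..Suc t}" by simp
    then have "L \<le> v (Suc t)" "v (Suc t) \<le> R" using vb by blast+
    then have vt: "0 \<le> v (Suc t)" "v (Suc t) \<le> R" using L by auto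
    have "real k * v (Suc t) / n \<le> real n * v (Suc t) / n"
      using k vt by (intro divide_right_mono mult_right_mono) auto
    then have kv: "real k * v (Suc t) / n \<le> R" using n1 vt by simp
    have kv0: "0 \<le> real k * v (Suc t) / n" using vt by simp
    have e: "real k * S v (Suc t) / n = real k * S v t / n + real k * v (Suc t) / n"
      by (simp add: S_Suc algebra_simps add_divide_distrib)
    have h1: "S v a - real k * S v t / n \<le> real n * R" "real k * S v t / n - S v a \<le> real n * R"
      using b1[rule_format, OF k] unfolding a_def abs_le_iff by auto
    have h2: "S v b - real k * S v (Suc t) / n \<le> real n * R" "real k * S v (Suc t) / n - S v b \<le> real n * R"
      using b2[rule_format, OF k] unfolding b_def abs_le_iff by auto
    have "\<bar>S v a - S v b\<bar> \<le> real n * R + real n * R + R"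
      by (rule lin6[OF h1 h2 kv kv0 e])
    moreover have "L * real (max a b - min a b) \<le> \<bar>S v a - S v b\<bar>"
    proof (cases "a \<le> b")
      case True
      then have "L * real (b - a) \<le> S v b - S v a" using vb bt by (intro S_lower) auto
      then show ?thesis using True by (simp add: max_def min_def)
    next
      case False
      then have "L * real (a - b) \<le> S v a - S v b" using vb at by (intro S_lower) auto
      then show ?thesis using False by (simp add: max_def min_def)
    qed
    moreover have "(2 * real n + 1) * R = real n * R + real n * R + R" by (simp add: algebra_simps)
    ultimately have "L * real (max a b - min a b) \<le> (2 * real n + 1) * R" by linarith
    then have "real (max a b - min a b) \<le> (2 * real n + 1) * R / L" using L by (simp add: pos_le_divide_eq mult.commute)
    then show ?thesis unfolding D_def a_def b_def by simp
  qed
  have sub: "{g\<in>{1..t}. \<not> (\<exists>j\<in>{1..n}. g \<in> blk Q1 j \<and> g \<in> blk Q2 j)} \<subseteq> (\<Union>k\<in>{1..<n}. D k)"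
  proof
    fix g assume gm: "g \<in> {g\<in>{1..t}. \<not> (\<exists>j\<in>{1..n}. g \<in> blk Q1 j \<and> g \<in> blk Q2 j)}"
    show "g \<in> (\<Union>k\<in>{1..<n}. D k)"
    proof (rule ccontr)
      assume nD: "g \<notin> (\<Union>k\<in>{1..<n}. D k)"
      obtain j where j: "j \<in> {1..n}" "g \<in> blk Q1 j" using cover[OF c1] gm by blast
      have g1: "Q1!(j-1) < g" "g \<le> Q1!j" using j by (auto simp: blk_def)
      have "Q2!(j-1) < g"
      proof (cases "j - 1 = 0")
        case True then show ?thesis using c2 gm by (auto simp: contig_def)
      next
        case False
        then have "j - 1 \<in> {1..<n}" using j by auto
        then have "g \<notin> D (j-1)" using nD by blast
        then show ?thesis using g1 unfolding D_def by auto
      qed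
      moreover have "g \<le> Q2!j"
      proof (cases "j = n")
        case True then show ?thesis using c2 gm by (auto simp: contig_def)
      next
        case False
        then have "j \<in> {1..<n}" using j by auto
        then have "g \<notin> D j" using nD by blast
        then show ?thesis using g1 unfolding D_def by auto
      qed
      ultimately have "g \<in> blk Q2 j" by (simp add: blk_def)
      then show False using gm j by blast
    qed
  qed
  have "card {g\<in>{1..t}. \<not> (\<exists>j\<in>{1..n}. g \<in> blk Q1 j \<and> g \<in> blk Q2 j)} \<le> card (\<Union>k\<in>{1..<n}. D k)"
    by (rule card_mono[OF _ sub]) (simp add: D_def)
  also have "\<dots> \<le> (\<Sum>k\<in>{1..<n}. card (D k))" by (rule card_UN_le) simp
  finally have "real (card {g\<in>{1..t}. \<not> (\<exists>j\<in>{1..n}. g \<in> blk Q1 j \<and> g \<in> blk Q2 j)}) \<le> real (\<Sum>k\<in>{1..<n}. card (D k))"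
    by (simp only: of_nat_le_iff)
  also have "\<dots> = (\<Sum>k\<in>{1..<n}. real (card (D k)))" by (rule of_nat_sum)
  also have "\<dots> \<le> (\<Sum>k\<in>{1..<n}. (2 * real n + 1) * R / L)"
    by (rule sum_mono) (use dist in auto)
  also have "\<dots> = real (n - 1) * ((2 * real n + 1) * R / L)" by simp
  also have "\<dots> \<le> 3 * (R / L) * real n ^ 2"
  proof -
    have "Suc t \<in> {1..Suc t}" by simp
    then have "L \<le> R" using vb by force
    then have RL: "0 \<le> R / L" using L by simp
    have nn: "real n \<le> real n * real n" using n1 by simp
    have "real (n - 1) \<le> real n" by simp
    then have "real (n - 1) * (2 * real n + 1) \<le> real n * (2 * real n + 1)"
      by (rule mult_right_mono) simp
    also have "\<dots> = 2 * (real n * real n) + real n" by (simp add: algebra_simps)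
    also have "\<dots> \<le> 3 * real n ^ 2" using nn by (simp add: power2_eq_square)
    finally have "real (n - 1) * (2 * real n + 1) \<le> 3 * real n ^ 2" .
    then have i1: "real (n - 1) * (2 * real n + 1) * (R / L) \<le> 3 * real n ^ 2 * (R / L)"
      using RL by (rule mult_right_mono)
    have e1: "real (n - 1) * ((2 * real n + 1) * R / L) = real (n - 1) * (2 * real n + 1) * (R / L)" by simp
    have e2: "3 * (R / L) * real n ^ 2 = 3 * real n ^ 2 * (R / L)" by simp
    show ?thesis unfolding e1 e2 by (rule i1)
  qed
  finally show ?thesis .
qed

theorem mainTheorem6:
  shows "\<exists>C::real. \<forall>(n::nat) (T::nat) (v::nat \<Rightarrow> real) (L::real) (R::real) (A::nat \<Rightarrow> nat list).
    1 \<le> n \<longrightarrow> 0 < L \<longrightarrow> L \<le> R \<longrightarrow>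
    (\<forall>g\<in>{1..T}. L \<le> v g \<and> v g \<le> R) \<longrightarrow>
    (\<forall>t\<in>{1..T}. alg3 v n t (A t)) \<longrightarrow>
      (\<forall>t\<in>{1..T}. contig n t (A t) \<and> EF1 v n (A t)) \<and>
      real (adjustments n T A) \<le> C * (R / L) * real n ^ 2 * real T"
proof (rule exI[of _ 3], intro allI impI)
  fix n T :: nat and v :: "nat \<Rightarrow> real" and L R :: real and A :: "nat \<Rightarrow> nat list"
  assume n1: "1 \<le> n" and L: "0 < L" and LR: "L \<le> R" and vb: "\<forall>g\<in>{1..T}. L \<le> v g \<and> v g \<le> R"
    and al: "\<forall>t\<in>{1..T}. alg3 v n t (A t)"
  have R0: "0 \<le> R" using L LR by simp
  have props: "contig n t (A t) \<and> EF1 v n (A t) \<and> (\<forall>j\<le>n. \<bar>S v (A t ! j) - real j * S v t / n\<bar> \<le> real n * R)"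
    if t: "t \<in> {1..T}" for t
    by (rule alg3_props[OF al[rule_format, OF t] _ R0 n1]) (use vb L t in force)
  show "(\<forall>t\<in>{1..T}. contig n t (A t) \<and> EF1 v n (A t)) \<and>
      real (adjustments n T A) \<le> 3 * (R / L) * real n ^ 2 * real T"
  proof
    show "\<forall>t\<in>{1..T}. contig n t (A t) \<and> EF1 v n (A t)" using props by blast
    have st: "real (card {g\<in>{1..t}. \<not> (\<exists>j\<in>{1..n}. g \<in> blk (A t) j \<and> g \<in> blk (A (Suc t)) j)}) \<le> 3 * (R / L) * real n ^ 2"
      if t: "t \<in> {1..<T}" for t
    proof (rule step_bound[OF n1 L])
      show "\<forall>g\<in>{1..Suc t}. L \<le> v g \<and> v g \<le> R" using vb t by auto
      show "contig n t (A t)" using props t by auto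
      show "contig n (Suc t) (A (Suc t))" using props t by auto
      show "\<forall>j\<le>n. \<bar>S v (A t ! j) - real j * S v t / n\<bar> \<le> real n * R" using props t by auto
      show "\<forall>j\<le>n. \<bar>S v (A (Suc t) ! j) - real j * S v (Suc t) / n\<bar> \<le> real n * R" using props[of "Suc t"] t by auto
    qed
    have "real (adjustments n T A) = (\<Sum>t\<in>{1..<T}. real (card {g\<in>{1..t}. \<not> (\<exists>j\<in>{1..n}. g \<in> blk (A t) j \<and> g \<in> blk (A (Suc t)) j)}))"
      unfolding adjustments_def by simp
    also have "\<dots> \<le> (\<Sum>t\<in>{1..<T}. 3 * (R / L) * real n ^ 2)" by (rule sum_mono) (use st in auto)
    also have "\<dots> = real (T - 1) * (3 * (R / L) * real n ^ 2)" by simp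
    also have "\<dots> \<le> real T * (3 * (R / L) * real n ^ 2)"
      using L LR by (intro mult_right_mono) auto
    finally show "real (adjustments n T A) \<le> 3 * (R / L) * real n ^ 2 * real T" by (simp add: algebra_simps)
  qed
qed


end
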